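(* Let $n\ge 2$ be even and $k\ge 3$. Then every Jenga-like configuration $Q$ of the $(n,k)$-game satisfies $$ g(Q)\le \frac{n(n-2)(k-2)}{2}. $$
   Context: The $(n,k)$-game is played with $nk$ blocks, each a box of length $n$, width $1$, height $1$. Level $i$ occupies heights $[i-1,i]$ and has $n$ slots $j=1,\dots,n$; a block in slot $j$ of an odd level $i$ is $[0,n]\times[j-1,j]\times[i-1,i]$, and of an even level $i$ is $[j-1,j]\times[0,n]\times[i-1,i]$. The initial configuration has $k$ full levels. A move removes exactly one block from a level which is not the topmost level and, when the topmost level is incomplete (fewer than $n$ blocks), is not the level immediately below the topmost level, and places it in an empty slot of the topmost level if that level is incomplete, or in a slot of a new level on top otherwise. A Jenga-like configuration is one obtainable from the initial configuration by finitely many moves in which every level up to the topmost contains at least one block. $g(Q)$ is the genus of the boundary surface of the union of the blocks of $Q$ (a connected closed polyhedral surface). *)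

theory Defs
  imports Complex_Main
begin

type_synonym point = "int \<times> int \<times> int"

(* A configuration: list of levels (index p = level p+1), each level is the set of
   occupied slots, slots numbered 0..n-1 (slot s = slot j = s+1 of the paper). *)
type_synonym config = "nat set list"

definition initial_config :: "nat \<Rightarrow> nat \<Rightarrow> config" where
  "initial_config n k = replicate k {0..<n}"

definition jenga_move :: "nat \<Rightarrow> config \<Rightarrow> config \<Rightarrow> bool" where
  "jenga_move n Q Q' \<longleftrightarrow>
     (\<exists>i j s. i < length Q - 1
        \<and> (card (last Q) < n \<longrightarrow> i \<noteq> length Q - 2)
        \<and> j \<in> Q ! i \<and> s < n
        \<and> (let Q1 = Q[i := Q ! i - {j}] in
             if card (last Q) < n
             then s \<notin> last Q \<and> Q' = butlast Q1 @ [insert s (last Q)]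
             else Q' = Q1 @ [{s}]))"

definition jenga_like :: "nat \<Rightarrow> nat \<Rightarrow> config \<Rightarrow> bool" where
  "jenga_like n k Q \<longleftrightarrow>
     (jenga_move n)\<^sup>*\<^sup>* (initial_config n k) Q \<and> (\<forall>i < length Q. Q ! i \<noteq> {})"

(* unit cubes [a,a+1]x[b,b+1]x[c,c+1] (lower corner (a,b,c)) making up the blocks.
   Level p+1 odd (p even): block in slot s is [0,n]x[s,s+1]x[p,p+1];
   level p+1 even (p odd): block in slot s is [s,s+1]x[0,n]x[p,p+1]. *)
definition cubes :: "nat \<Rightarrow> config \<Rightarrow> point set" where
  "cubes n Q = {(a, b, c) | a b c. 0 \<le> a \<and> 0 \<le> b \<and> 0 \<le> c \<and> nat c < length Q \<and>
      ((even (nat c) \<and> nat b \<in> Q ! nat c \<and> a < int n) \<or>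
       (odd (nat c) \<and> nat a \<in> Q ! nat c \<and> b < int n))}"

definition corners :: "point \<Rightarrow> point set" where
  "corners p = (case p of (a, b, c) \<Rightarrow>
     {(a + dx, b + dy, c + dz) | dx dy dz. dx \<in> {0, 1} \<and> dy \<in> {0, 1} \<and> dz \<in> {0, 1}})"

definition addp :: "point \<Rightarrow> point \<Rightarrow> point" where
  "addp p q = (case p of (a, b, c) \<Rightarrow> case q of (x, y, z) \<Rightarrow> (a + x, b + y, c + z))"

definition unit_dirs :: "point set" where
  "unit_dirs = {(1,0,0), (-1,0,0), (0,1,0), (0,-1,0), (0,0,1), (0,0,-1)}"

definition l1dist :: "point \<Rightarrow> point \<Rightarrow> int" where
  "l1dist p q = (case p of (a, b, c) \<Rightarrow> case q of (x, y, z) \<Rightarrow> \<bar>a - x\<bar> + \<bar>b - y\<bar> + \<bar>c - z\<bar>)"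

definition bfaces :: "nat \<Rightarrow> config \<Rightarrow> point set set" where
  "bfaces n Q = {corners p \<inter> corners (addp p d) | p d.
      p \<in> cubes n Q \<and> d \<in> unit_dirs \<and> addp p d \<notin> cubes n Q}"

definition bedges :: "nat \<Rightarrow> config \<Rightarrow> point set set" where
  "bedges n Q = {{u, v} | u v F. F \<in> bfaces n Q \<and> u \<in> F \<and> v \<in> F \<and> l1dist u v = 1}"

definition bverts :: "nat \<Rightarrow> config \<Rightarrow> point set" where
  "bverts n Q = \<Union> (bfaces n Q)"

definition euler_char :: "nat \<Rightarrow> config \<Rightarrow> int" where
  "euler_char n Q = int (card (bverts n Q)) - int (card (bedges n Q)) + int (card (bfaces n Q))"

(* genus of a closed connected orientable surface: chi = 2 - 2g *)
definition genus :: "nat \<Rightarrow> config \<Rightarrow> real" where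
  "genus n Q = (2 - real_of_int (euler_char n Q)) / 2"

end

theory Submission
  imports Defs
begin


lemma mem_corners: "(x,y,z) \<in> corners (a,b,c) \<longleftrightarrow> a \<le> x \<and> x \<le> a+1 \<and> b \<le> y \<and> y \<le> b+1 \<and> c \<le> z \<and> z \<le> c+1"
proof
  assume "(x,y,z) \<in> corners (a,b,c)" then show "a \<le> x \<and> x \<le> a+1 \<and> b \<le> y \<and> y \<le> b+1 \<and> c \<le> z \<and> z \<le> c+1"
    unfolding corners_def by auto
next
  assume h: "a \<le> x \<and> x \<le> a+1 \<and> b \<le> y \<and> y \<le> b+1 \<and> c \<le> z \<and> z \<le> c+1"
  have "x - a \<in> {0,1} \<and> y - b \<in> {0,1} \<and> z - c \<in> {0,1}" using h by auto
  then have "\<exists>dx dy dz. (x,y,z) = (a+dx,b+dy,c+dz) \<and> dx \<in> {0,1} \<and> dy \<in> {0,1} \<and> dz \<in> {0,1}"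
    by (intro exI[of _ "x-a"] exI[of _ "y-b"] exI[of _ "z-c"]) auto
  then show "(x,y,z) \<in> corners (a,b,c)" unfolding corners_def by simp
qed

definition xf :: "int \<Rightarrow> int \<Rightarrow> int \<Rightarrow> point set" where
  "xf a b c = {(x,y,z). x = a \<and> b \<le> y \<and> y \<le> b+1 \<and> c \<le> z \<and> z \<le> c+1}"
definition yf :: "int \<Rightarrow> int \<Rightarrow> int \<Rightarrow> point set" where
  "yf a b c = {(x,y,z). a \<le> x \<and> x \<le> a+1 \<and> y = b \<and> c \<le> z \<and> z \<le> c+1}"
definition zf :: "int \<Rightarrow> int \<Rightarrow> int \<Rightarrow> point set" where
  "zf a b c = {(x,y,z). a \<le> x \<and> x \<le> a+1 \<and> b \<le> y \<and> y \<le> b+1 \<and> z = c}"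

lemma ci1: "corners (a,b,c) \<inter> corners (a+1,b,c) = xf (a+1) b c"
  unfolding xf_def by (auto simp: mem_corners)
lemma ci2: "corners (a,b,c) \<inter> corners (a-1,b,c) = xf a b c"
  unfolding xf_def by (auto simp: mem_corners)
lemma ci3: "corners (a,b,c) \<inter> corners (a,b+1,c) = yf a (b+1) c"
  unfolding yf_def by (auto simp: mem_corners)
lemma ci4: "corners (a,b,c) \<inter> corners (a,b-1,c) = yf a b c"
  unfolding yf_def by (auto simp: mem_corners)
lemma ci5: "corners (a,b,c) \<inter> corners (a,b,c+1) = zf a b (c+1)"
  unfolding zf_def by (auto simp: mem_corners)
lemma ci6: "corners (a,b,c) \<inter> corners (a,b,c-1) = zf a b c"
  unfolding zf_def by (auto simp: mem_corners)



definition FX where "FX n Q = {(a,b,c). ((a-1,b,c) \<in> cubes n Q) \<noteq> ((a,b,c) \<in> cubes n Q)}"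
definition FY where "FY n Q = {(a,b,c). ((a,b-1,c) \<in> cubes n Q) \<noteq> ((a,b,c) \<in> cubes n Q)}"
definition FZ where "FZ n Q = {(a,b,c). ((a,b,c-1) \<in> cubes n Q) \<noteq> ((a,b,c) \<in> cubes n Q)}"

lemma bfI: "p \<in> cubes n Q \<Longrightarrow> d \<in> unit_dirs \<Longrightarrow> addp p d \<notin> cubes n Q \<Longrightarrow> corners p \<inter> corners (addp p d) \<in> bfaces n Q"
  unfolding bfaces_def by blast

lemma bfaces_eq: "bfaces n Q = (\<lambda>(a,b,c). xf a b c) ` FX n Q \<union> (\<lambda>(a,b,c). yf a b c) ` FY n Q \<union> (\<lambda>(a,b,c). zf a b c) ` FZ n Q"
  (is "?L = ?R")
proof
  show "?L \<subseteq> ?R"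
  proof
    fix f assume "f \<in> ?L"
    then obtain a b c d where p: "(a,b,c) \<in> cubes n Q" "d \<in> unit_dirs" "addp (a,b,c) d \<notin> cubes n Q"
      and f: "f = corners (a,b,c) \<inter> corners (addp (a,b,c) d)"
      unfolding bfaces_def by auto
    from p(2) consider "d = (1,0,0)" | "d = (-1,0,0)" | "d = (0,1,0)" | "d = (0,-1,0)" | "d = (0,0,1)" | "d = (0,0,-1)"
      unfolding unit_dirs_def by auto
    then show "f \<in> ?R"
    proof cases
      case 1
      then have "f = xf (a+1) b c" "(a+1,b,c) \<in> FX n Q" using p f ci1 by (auto simp: addp_def FX_def)
      then show ?thesis by (auto intro!: image_eqI[of _ _ "(a+1,b,c)"])
    next
      case 2
      then have "f = xf a b c" "(a,b,c) \<in> FX n Q" using p f ci2 by (auto simp: addp_def FX_def)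
      then show ?thesis by (auto intro!: image_eqI[of _ _ "(a,b,c)"])
    next
      case 3
      then have "f = yf a (b+1) c" "(a,b+1,c) \<in> FY n Q" using p f ci3 by (auto simp: addp_def FY_def)
      then show ?thesis by (auto intro!: image_eqI[of _ _ "(a,b+1,c)"])
    next
      case 4
      then have "f = yf a b c" "(a,b,c) \<in> FY n Q" using p f ci4 by (auto simp: addp_def FY_def)
      then show ?thesis by (auto intro!: image_eqI[of _ _ "(a,b,c)"])
    next
      case 5
      then have "f = zf a b (c+1)" "(a,b,c+1) \<in> FZ n Q" using p f ci5 by (auto simp: addp_def FZ_def)
      then show ?thesis by (auto intro!: image_eqI[of _ _ "(a,b,c+1)"])
    next
      case 6
      then have "f = zf a b c" "(a,b,c) \<in> FZ n Q" using p f ci6 by (auto simp: addp_def FZ_def)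
      then show ?thesis by (auto intro!: image_eqI[of _ _ "(a,b,c)"])
    qed
  qed
next
  have d: "(1,0,0) \<in> unit_dirs" "(-1,0,0) \<in> unit_dirs" "(0,1,0) \<in> unit_dirs" "(0,-1,0) \<in> unit_dirs"
     "(0,0,1) \<in> unit_dirs" "(0,0,-1) \<in> unit_dirs" unfolding unit_dirs_def by auto
  show "?R \<subseteq> ?L"
  proof
    fix f assume "f \<in> ?R"
    then consider a b c where "(a,b,c) \<in> FX n Q" "f = xf a b c"
      | a b c where "(a,b,c) \<in> FY n Q" "f = yf a b c"
      | a b c where "(a,b,c) \<in> FZ n Q" "f = zf a b c" by auto
    then show "f \<in> ?L"
    proof cases
      case 1
      show ?thesis
      proof (cases "(a,b,c) \<in> cubes n Q")
        case True
        then show ?thesis using 1 d bfI[of "(a,b,c)" n Q "(-1,0,0)"] ci2[of a b c] unfolding FX_def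
          by (auto simp: addp_def)
      next
        case False
        then show ?thesis using 1 d bfI[of "(a-1,b,c)" n Q "(1,0,0)"] ci1[of "a-1" b c] unfolding FX_def
          by (auto simp: addp_def)
      qed
    next
      case 2
      show ?thesis
      proof (cases "(a,b,c) \<in> cubes n Q")
        case True
        then show ?thesis using 2 d bfI[of "(a,b,c)" n Q "(0,-1,0)"] ci4[of a b c] unfolding FY_def
          by (auto simp: addp_def)
      next
        case False
        then show ?thesis using 2 d bfI[of "(a,b-1,c)" n Q "(0,1,0)"] ci3[of a "b-1" c] unfolding FY_def
          by (auto simp: addp_def)
      qed
    next
      case 3
      show ?thesis
      proof (cases "(a,b,c) \<in> cubes n Q")
        case True
        then show ?thesis using 3 d bfI[of "(a,b,c)" n Q "(0,0,-1)"] ci6[of a b c] unfolding FZ_def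
          by (auto simp: addp_def)
      next
        case False
        then show ?thesis using 3 d bfI[of "(a,b,c-1)" n Q "(0,0,1)"] ci5[of a b "c-1"] unfolding FZ_def
          by (auto simp: addp_def)
      qed
    qed
  qed
qed



definition xs :: "int \<Rightarrow> int \<Rightarrow> int \<Rightarrow> point set" where "xs a b c = {(a,b,c),(a+1,b,c)}"
definition ys :: "int \<Rightarrow> int \<Rightarrow> int \<Rightarrow> point set" where "ys a b c = {(a,b,c),(a,b+1,c)}"
definition zs :: "int \<Rightarrow> int \<Rightarrow> int \<Rightarrow> point set" where "zs a b c = {(a,b,c),(a,b,c+1)}"

definition EXd where "EXd n Q = {(a,b,c). (a,b,c) \<in> FY n Q \<or> (a,b,c-1) \<in> FY n Q \<or> (a,b,c) \<in> FZ n Q \<or> (a,b-1,c) \<in> FZ n Q}"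
definition EYd where "EYd n Q = {(a,b,c). (a,b,c) \<in> FX n Q \<or> (a,b,c-1) \<in> FX n Q \<or> (a,b,c) \<in> FZ n Q \<or> (a-1,b,c) \<in> FZ n Q}"
definition EZd where "EZd n Q = {(a,b,c). (a,b,c) \<in> FX n Q \<or> (a,b-1,c) \<in> FX n Q \<or> (a,b,c) \<in> FY n Q \<or> (a-1,b,c) \<in> FY n Q}"

lemma l1_cases: "l1dist (x,y,z) (x',y',z') = 1 \<Longrightarrow>
  (y = y' \<and> z = z' \<and> (x' = x+1 \<or> x = x'+1)) \<or> (x = x' \<and> z = z' \<and> (y' = y+1 \<or> y = y'+1)) \<or> (x = x' \<and> y = y' \<and> (z' = z+1 \<or> z = z'+1))"
  by (simp only: l1dist_def prod.case) arith

lemma mem_xf: "(x,y,z) \<in> xf a b c \<longleftrightarrow> x = a \<and> b \<le> y \<and> y \<le> b+1 \<and> c \<le> z \<and> z \<le> c+1" unfolding xf_def by auto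
lemma mem_yf: "(x,y,z) \<in> yf a b c \<longleftrightarrow> a \<le> x \<and> x \<le> a+1 \<and> y = b \<and> c \<le> z \<and> z \<le> c+1" unfolding yf_def by auto
lemma mem_zf: "(x,y,z) \<in> zf a b c \<longleftrightarrow> a \<le> x \<and> x \<le> a+1 \<and> b \<le> y \<and> y \<le> b+1 \<and> z = c" unfolding zf_def by auto

lemma edge_xf: assumes "u \<in> xf a b c" "v \<in> xf a b c" "l1dist u v = 1"
  shows "{u,v} \<in> (\<lambda>(a,b,c). ys a b c) ` {(a,b,c),(a,b,c+1)} \<union> (\<lambda>(a,b,c). zs a b c) ` {(a,b,c),(a,b+1,c)}"
proof -
  obtain x y z x' y' z' where uv: "u = (x,y,z)" "v = (x',y',z')" by (cases u, cases v) auto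
  have h: "x = a" "x' = a" "b \<le> y" "y \<le> b+1" "c \<le> z" "z \<le> c+1" "b \<le> y'" "y' \<le> b+1" "c \<le> z'" "z' \<le> c+1"
    using assms(1,2) unfolding uv mem_xf by auto
  have "(z = z' \<and> (y' = y+1 \<or> y = y'+1)) \<or> (y = y' \<and> (z' = z+1 \<or> z = z'+1))"
    using l1_cases[of x y z x' y' z'] assms(3) h unfolding uv by auto
  then consider "z = z'" "y = b" "y' = b+1" | "z = z'" "y' = b" "y = b+1" | "y = y'" "z = c" "z' = c+1" | "y = y'" "z' = c" "z = c+1"
    using h by linarith
  then show ?thesis
  proof cases
    case 1
    then have "{u,v} = ys a b z" "z = c \<or> z = c+1" using h unfolding uv ys_def by auto
    then show ?thesis by auto
  next
    case 2
    then have "{u,v} = ys a b z" "z = c \<or> z = c+1" using h unfolding uv ys_def by auto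
    then show ?thesis by auto
  next
    case 3
    then have "{u,v} = zs a y c" "y = b \<or> y = b+1" using h unfolding uv zs_def by auto
    then show ?thesis by auto
  next
    case 4
    then have "{u,v} = zs a y c" "y = b \<or> y = b+1" using h unfolding uv zs_def by auto
    then show ?thesis by auto
  qed
qed

lemma edge_yf: assumes "u \<in> yf a b c" "v \<in> yf a b c" "l1dist u v = 1"
  shows "{u,v} \<in> (\<lambda>(a,b,c). xs a b c) ` {(a,b,c),(a,b,c+1)} \<union> (\<lambda>(a,b,c). zs a b c) ` {(a,b,c),(a+1,b,c)}"
proof -
  obtain x y z x' y' z' where uv: "u = (x,y,z)" "v = (x',y',z')" by (cases u, cases v) auto
  have h: "y = b" "y' = b" "a \<le> x" "x \<le> a+1" "c \<le> z" "z \<le> c+1" "a \<le> x'" "x' \<le> a+1" "c \<le> z'" "z' \<le> c+1"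
    using assms(1,2) unfolding uv mem_yf by auto
  have "(z = z' \<and> (x' = x+1 \<or> x = x'+1)) \<or> (x = x' \<and> (z' = z+1 \<or> z = z'+1))"
    using l1_cases[of x y z x' y' z'] assms(3) h unfolding uv by auto
  then consider "z = z'" "x = a" "x' = a+1" | "z = z'" "x' = a" "x = a+1" | "x = x'" "z = c" "z' = c+1" | "x = x'" "z' = c" "z = c+1"
    using h by linarith
  then show ?thesis
  proof cases
    case 1
    then have "{u,v} = xs a b z" "z = c \<or> z = c+1" using h unfolding uv xs_def by auto
    then show ?thesis by auto
  next
    case 2
    then have "{u,v} = xs a b z" "z = c \<or> z = c+1" using h unfolding uv xs_def by auto
    then show ?thesis by auto
  next
    case 3
    then have "{u,v} = zs x b c" "x = a \<or> x = a+1" using h unfolding uv zs_def by auto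
    then show ?thesis by auto
  next
    case 4
    then have "{u,v} = zs x b c" "x = a \<or> x = a+1" using h unfolding uv zs_def by auto
    then show ?thesis by auto
  qed
qed

lemma edge_zf: assumes "u \<in> zf a b c" "v \<in> zf a b c" "l1dist u v = 1"
  shows "{u,v} \<in> (\<lambda>(a,b,c). xs a b c) ` {(a,b,c),(a,b+1,c)} \<union> (\<lambda>(a,b,c). ys a b c) ` {(a,b,c),(a+1,b,c)}"
proof -
  obtain x y z x' y' z' where uv: "u = (x,y,z)" "v = (x',y',z')" by (cases u, cases v) auto
  have h: "z = c" "z' = c" "a \<le> x" "x \<le> a+1" "b \<le> y" "y \<le> b+1" "a \<le> x'" "x' \<le> a+1" "b \<le> y'" "y' \<le> b+1"
    using assms(1,2) unfolding uv mem_zf by auto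
  have "(y = y' \<and> (x' = x+1 \<or> x = x'+1)) \<or> (x = x' \<and> (y' = y+1 \<or> y = y'+1))"
    using l1_cases[of x y z x' y' z'] assms(3) h unfolding uv by auto
  then consider "y = y'" "x = a" "x' = a+1" | "y = y'" "x' = a" "x = a+1" | "x = x'" "y = b" "y' = b+1" | "x = x'" "y' = b" "y = b+1"
    using h by linarith
  then show ?thesis
  proof cases
    case 1
    then have "{u,v} = xs a y c" "y = b \<or> y = b+1" using h unfolding uv xs_def by auto
    then show ?thesis by auto
  next
    case 2
    then have "{u,v} = xs a y c" "y = b \<or> y = b+1" using h unfolding uv xs_def by auto
    then show ?thesis by auto
  next
    case 3
    then have "{u,v} = ys x b c" "x = a \<or> x = a+1" using h unfolding uv ys_def by auto
    then show ?thesis by auto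
  next
    case 4
    then have "{u,v} = ys x b c" "x = a \<or> x = a+1" using h unfolding uv ys_def by auto
    then show ?thesis by auto
  qed
qed



lemma beI: "f \<in> bfaces n Q \<Longrightarrow> u \<in> f \<Longrightarrow> v \<in> f \<Longrightarrow> l1dist u v = 1 \<Longrightarrow> {u,v} \<in> bedges n Q"
  unfolding bedges_def by blast

lemma fxI: "(a,b,c) \<in> FX n Q \<Longrightarrow> xf a b c \<in> bfaces n Q" by (subst bfaces_eq) (auto intro!: image_eqI)
lemma fyI: "(a,b,c) \<in> FY n Q \<Longrightarrow> yf a b c \<in> bfaces n Q" by (subst bfaces_eq) (auto intro!: image_eqI)
lemma fzI: "(a,b,c) \<in> FZ n Q \<Longrightarrow> zf a b c \<in> bfaces n Q" by (subst bfaces_eq) (auto intro!: image_eqI)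

lemma l1x: "l1dist (a,b,c) (a+1,b,c) = 1" by (simp add: l1dist_def)
lemma l1y: "l1dist (a,b,c) (a,b+1,c) = 1" by (simp add: l1dist_def)
lemma l1z: "l1dist (a,b,c) (a,b,c+1) = 1" by (simp add: l1dist_def)

lemma bedges_eq: "bedges n Q = (\<lambda>(a,b,c). xs a b c) ` EXd n Q \<union> (\<lambda>(a,b,c). ys a b c) ` EYd n Q \<union> (\<lambda>(a,b,c). zs a b c) ` EZd n Q"
  (is "?L = ?R")
proof
  show "?L \<subseteq> ?R"
  proof
    fix e assume "e \<in> ?L"
    then obtain u v f where e: "e = {u,v}" "f \<in> bfaces n Q" "u \<in> f" "v \<in> f" "l1dist u v = 1"
      unfolding bedges_def by blast
    from e(2) consider a b c where "(a,b,c) \<in> FX n Q" "f = xf a b c"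
      | a b c where "(a,b,c) \<in> FY n Q" "f = yf a b c"
      | a b c where "(a,b,c) \<in> FZ n Q" "f = zf a b c" unfolding bfaces_eq by auto
    then show "e \<in> ?R"
    proof cases
      case 1
      then have "(a,b,c) \<in> EYd n Q" "(a,b,c+1) \<in> EYd n Q" "(a,b,c) \<in> EZd n Q" "(a,b+1,c) \<in> EZd n Q"
        by (auto simp: EYd_def EZd_def)
      then show ?thesis using edge_xf[of u a b c v] e 1 by blast
    next
      case 2
      then have "(a,b,c) \<in> EXd n Q" "(a,b,c+1) \<in> EXd n Q" "(a,b,c) \<in> EZd n Q" "(a+1,b,c) \<in> EZd n Q"
        by (auto simp: EXd_def EZd_def)
      then show ?thesis using edge_yf[of u a b c v] e 2 by blast
    next
      case 3
      then have "(a,b,c) \<in> EXd n Q" "(a,b+1,c) \<in> EXd n Q" "(a,b,c) \<in> EYd n Q" "(a+1,b,c) \<in> EYd n Q"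
        by (auto simp: EXd_def EYd_def)
      then show ?thesis using edge_zf[of u a b c v] e 3 by blast
    qed
  qed
next
  show "?R \<subseteq> ?L"
  proof
    fix e assume "e \<in> ?R"
    then consider a b c where "(a,b,c) \<in> EXd n Q" "e = xs a b c"
      | a b c where "(a,b,c) \<in> EYd n Q" "e = ys a b c"
      | a b c where "(a,b,c) \<in> EZd n Q" "e = zs a b c" by auto
    then show "e \<in> ?L"
    proof cases
      case 1
      have "\<exists>f \<in> bfaces n Q. (a,b,c) \<in> f \<and> (a+1,b,c) \<in> f"
      proof -
        from 1(1) consider "(a,b,c) \<in> FY n Q" | "(a,b,c-1) \<in> FY n Q" | "(a,b,c) \<in> FZ n Q" | "(a,b-1,c) \<in> FZ n Q"
          unfolding EXd_def by auto
        then show ?thesis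
        proof cases
          case 1 then show ?thesis by (intro bexI[OF _ fyI]) (auto simp: mem_yf)
        next
          case 2 then show ?thesis by (intro bexI[OF _ fyI]) (auto simp: mem_yf)
        next
          case 3 then show ?thesis by (intro bexI[OF _ fzI]) (auto simp: mem_zf)
        next
          case 4 then show ?thesis by (intro bexI[OF _ fzI]) (auto simp: mem_zf)
        qed
      qed
      then show ?thesis using 1(2) beI l1x unfolding xs_def by blast
    next
      case 2
      have "\<exists>f \<in> bfaces n Q. (a,b,c) \<in> f \<and> (a,b+1,c) \<in> f"
      proof -
        from 2(1) consider "(a,b,c) \<in> FX n Q" | "(a,b,c-1) \<in> FX n Q" | "(a,b,c) \<in> FZ n Q" | "(a-1,b,c) \<in> FZ n Q"
          unfolding EYd_def by auto
        then show ?thesis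
        proof cases
          case 1 then show ?thesis by (intro bexI[OF _ fxI]) (auto simp: mem_xf)
        next
          case 2 then show ?thesis by (intro bexI[OF _ fxI]) (auto simp: mem_xf)
        next
          case 3 then show ?thesis by (intro bexI[OF _ fzI]) (auto simp: mem_zf)
        next
          case 4 then show ?thesis by (intro bexI[OF _ fzI]) (auto simp: mem_zf)
        qed
      qed
      then show ?thesis using 2(2) beI l1y unfolding ys_def by blast
    next
      case 3
      have "\<exists>f \<in> bfaces n Q. (a,b,c) \<in> f \<and> (a,b,c+1) \<in> f"
      proof -
        from 3(1) consider "(a,b,c) \<in> FX n Q" | "(a,b-1,c) \<in> FX n Q" | "(a,b,c) \<in> FY n Q" | "(a-1,b,c) \<in> FY n Q"
          unfolding EZd_def by auto
        then show ?thesis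
        proof cases
          case 1 then show ?thesis by (intro bexI[OF _ fxI]) (auto simp: mem_xf)
        next
          case 2 then show ?thesis by (intro bexI[OF _ fxI]) (auto simp: mem_xf)
        next
          case 3 then show ?thesis by (intro bexI[OF _ fyI]) (auto simp: mem_yf)
        next
          case 4 then show ?thesis by (intro bexI[OF _ fyI]) (auto simp: mem_yf)
        qed
      qed
      then show ?thesis using 3(2) beI l1z unfolding zs_def by blast
    qed
  qed
qed



definition VV where "VV n Q = {(x,y,z). (x,y,z) \<in> FX n Q \<or> (x,y-1,z) \<in> FX n Q \<or> (x,y,z-1) \<in> FX n Q \<or> (x,y-1,z-1) \<in> FX n Q \<or>
   (x,y,z) \<in> FY n Q \<or> (x-1,y,z) \<in> FY n Q \<or> (x,y,z-1) \<in> FY n Q \<or> (x-1,y,z-1) \<in> FY n Q \<or>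
   (x,y,z) \<in> FZ n Q \<or> (x-1,y,z) \<in> FZ n Q \<or> (x,y-1,z) \<in> FZ n Q \<or> (x-1,y-1,z) \<in> FZ n Q}"

lemma bverts_eq: "bverts n Q = VV n Q"
proof (rule set_eqI)
  fix v :: point
  obtain x y z where v: "v = (x,y,z)" by (cases v) auto
  show "v \<in> bverts n Q \<longleftrightarrow> v \<in> VV n Q"
  proof
    assume "v \<in> bverts n Q"
    then obtain f where f: "f \<in> bfaces n Q" "v \<in> f" unfolding bverts_def by auto
    from f(1) consider a b c where "(a,b,c) \<in> FX n Q" "f = xf a b c"
      | a b c where "(a,b,c) \<in> FY n Q" "f = yf a b c"
      | a b c where "(a,b,c) \<in> FZ n Q" "f = zf a b c" unfolding bfaces_eq by auto
    then show "v \<in> VV n Q"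
    proof cases
      case 1
      then have "x = a" "y = b \<or> y = b+1" "z = c \<or> z = c+1" using f(2) 1(2) unfolding v by (auto simp: mem_xf)
      then show ?thesis using 1 unfolding v VV_def by auto
    next
      case 2
      then have "y = b" "x = a \<or> x = a+1" "z = c \<or> z = c+1" using f(2) 2(2) unfolding v by (auto simp: mem_yf)
      then show ?thesis using 2 unfolding v VV_def by auto
    next
      case 3
      then have "z = c" "x = a \<or> x = a+1" "y = b \<or> y = b+1" using f(2) 3(2) unfolding v by (auto simp: mem_zf)
      then show ?thesis using 3 unfolding v VV_def by auto
    qed
  next
    assume "v \<in> VV n Q"
    then have "(x,y,z) \<in> FX n Q \<or> (x,y-1,z) \<in> FX n Q \<or> (x,y,z-1) \<in> FX n Q \<or> (x,y-1,z-1) \<in> FX n Q \<or> (x,y,z) \<in> FY n Q \<or> (x-1,y,z) \<in> FY n Q \<or> (x,y,z-1) \<in> FY n Q \<or> (x-1,y,z-1) \<in> FY n Q \<or> (x,y,z) \<in> FZ n Q \<or> (x-1,y,z) \<in> FZ n Q \<or> (x,y-1,z) \<in> FZ n Q \<or> (x-1,y-1,z) \<in> FZ n Q" unfolding v VV_def by simp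
    then have "\<exists>f \<in> bfaces n Q. (x,y,z) \<in> f"
    proof (elim disjE)
      assume "(x,y,z) \<in> FX n Q" show ?thesis by (rule bexI[OF _ fxI[OF \<open>(x,y,z) \<in> FX n Q\<close>]]) (simp add: mem_xf)
    next
      assume "(x,y-1,z) \<in> FX n Q" show ?thesis by (rule bexI[OF _ fxI[OF \<open>(x,y-1,z) \<in> FX n Q\<close>]]) (simp add: mem_xf)
    next
      assume "(x,y,z-1) \<in> FX n Q" show ?thesis by (rule bexI[OF _ fxI[OF \<open>(x,y,z-1) \<in> FX n Q\<close>]]) (simp add: mem_xf)
    next
      assume "(x,y-1,z-1) \<in> FX n Q" show ?thesis by (rule bexI[OF _ fxI[OF \<open>(x,y-1,z-1) \<in> FX n Q\<close>]]) (simp add: mem_xf)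
    next
      assume "(x,y,z) \<in> FY n Q" show ?thesis by (rule bexI[OF _ fyI[OF \<open>(x,y,z) \<in> FY n Q\<close>]]) (simp add: mem_yf)
    next
      assume "(x-1,y,z) \<in> FY n Q" show ?thesis by (rule bexI[OF _ fyI[OF \<open>(x-1,y,z) \<in> FY n Q\<close>]]) (simp add: mem_yf)
    next
      assume "(x,y,z-1) \<in> FY n Q" show ?thesis by (rule bexI[OF _ fyI[OF \<open>(x,y,z-1) \<in> FY n Q\<close>]]) (simp add: mem_yf)
    next
      assume "(x-1,y,z-1) \<in> FY n Q" show ?thesis by (rule bexI[OF _ fyI[OF \<open>(x-1,y,z-1) \<in> FY n Q\<close>]]) (simp add: mem_yf)
    next
      assume "(x,y,z) \<in> FZ n Q" show ?thesis by (rule bexI[OF _ fzI[OF \<open>(x,y,z) \<in> FZ n Q\<close>]]) (simp add: mem_zf)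
    next
      assume "(x-1,y,z) \<in> FZ n Q" show ?thesis by (rule bexI[OF _ fzI[OF \<open>(x-1,y,z) \<in> FZ n Q\<close>]]) (simp add: mem_zf)
    next
      assume "(x,y-1,z) \<in> FZ n Q" show ?thesis by (rule bexI[OF _ fzI[OF \<open>(x,y-1,z) \<in> FZ n Q\<close>]]) (simp add: mem_zf)
    next
      assume "(x-1,y-1,z) \<in> FZ n Q" show ?thesis by (rule bexI[OF _ fzI[OF \<open>(x-1,y-1,z) \<in> FZ n Q\<close>]]) (simp add: mem_zf)
    qed
    then show "v \<in> bverts n Q" unfolding v bverts_def by auto
  qed
qed



definition okQ :: "nat \<Rightarrow> config \<Rightarrow> bool" where
  "okQ n Q \<longleftrightarrow> (\<forall>i<length Q. Q!i \<subseteq> {0..<n})"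

lemma cube_bounds: assumes "okQ n Q" "(a,b,c) \<in> cubes n Q"
  shows "0 \<le> a \<and> a < int n \<and> 0 \<le> b \<and> b < int n \<and> 0 \<le> c \<and> c < int (length Q)"
proof -
  from assms(2) have h: "0 \<le> a" "0 \<le> b" "0 \<le> c" "nat c < length Q"
    "(even (nat c) \<and> nat b \<in> Q ! nat c \<and> a < int n) \<or> (odd (nat c) \<and> nat a \<in> Q ! nat c \<and> b < int n)"
    unfolding cubes_def by auto
  have s: "Q ! nat c \<subseteq> {0..<n}" using assms(1) h(4) unfolding okQ_def by auto
  from h(5) show ?thesis
  proof
    assume "even (nat c) \<and> nat b \<in> Q ! nat c \<and> a < int n"
    then have "nat b < n" "a < int n" using s by auto
    then show ?thesis using h by linarith
  next
    assume "odd (nat c) \<and> nat a \<in> Q ! nat c \<and> b < int n"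
    then have "nat a < n" "b < int n" using s by auto
    then show ?thesis using h by linarith
  qed
qed

definition box :: "nat \<Rightarrow> nat \<Rightarrow> point set" where
  "box n L = {-1..int n+2} \<times> {-1..int n+2} \<times> {-1..int L+2}"

lemma finite_box: "finite (box n L)" unfolding box_def by auto

lemma FX_bounds: "okQ n Q \<Longrightarrow> (a,b,c) \<in> FX n Q \<Longrightarrow> 0 \<le> a \<and> a \<le> int n \<and> 0 \<le> b \<and> b < int n \<and> 0 \<le> c \<and> c < int (length Q)"
  unfolding FX_def using cube_bounds[of n Q a b c] cube_bounds[of n Q "a-1" b c] by (cases "(a,b,c) \<in> cubes n Q") auto
lemma FY_bounds: "okQ n Q \<Longrightarrow> (a,b,c) \<in> FY n Q \<Longrightarrow> 0 \<le> a \<and> a < int n \<and> 0 \<le> b \<and> b \<le> int n \<and> 0 \<le> c \<and> c < int (length Q)"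
  unfolding FY_def using cube_bounds[of n Q a b c] cube_bounds[of n Q a "b-1" c] by (cases "(a,b,c) \<in> cubes n Q") auto
lemma FZ_bounds: "okQ n Q \<Longrightarrow> (a,b,c) \<in> FZ n Q \<Longrightarrow> 0 \<le> a \<and> a < int n \<and> 0 \<le> b \<and> b < int n \<and> 0 \<le> c \<and> c \<le> int (length Q)"
  unfolding FZ_def using cube_bounds[of n Q a b c] cube_bounds[of n Q a b "c-1"] by (cases "(a,b,c) \<in> cubes n Q") auto

context fixes n Q assumes ok: "okQ n Q" begin

lemma FXb: "(a,b,c) \<in> FX n Q \<Longrightarrow> 0 \<le> a \<and> a \<le> int n \<and> 0 \<le> b \<and> b \<le> int n \<and> 0 \<le> c \<and> c \<le> int (length Q)"
  using FX_bounds[OF ok] by force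
lemma FYb: "(a,b,c) \<in> FY n Q \<Longrightarrow> 0 \<le> a \<and> a \<le> int n \<and> 0 \<le> b \<and> b \<le> int n \<and> 0 \<le> c \<and> c \<le> int (length Q)"
  using FY_bounds[OF ok] by force
lemma FZb: "(a,b,c) \<in> FZ n Q \<Longrightarrow> 0 \<le> a \<and> a \<le> int n \<and> 0 \<le> b \<and> b \<le> int n \<and> 0 \<le> c \<and> c \<le> int (length Q)"
  using FZ_bounds[OF ok] by force

lemma inbox: "0 \<le> a \<and> a \<le> int n \<and> 0 \<le> b \<and> b \<le> int n \<and> 0 \<le> c \<and> c \<le> int L \<Longrightarrow>
  x - a \<in> {0,1} \<Longrightarrow> y - b \<in> {0,1} \<Longrightarrow> z - c \<in> {0,1} \<Longrightarrow> (x,y,z) \<in> box n L"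
  unfolding box_def by auto

lemma FX_box: "FX n Q \<subseteq> box n (length Q)"
  using inbox[OF FXb] by fastforce
lemma FY_box: "FY n Q \<subseteq> box n (length Q)"
  using inbox[OF FYb] by fastforce
lemma FZ_box: "FZ n Q \<subseteq> box n (length Q)"
  using inbox[OF FZb] by fastforce
lemma EX_box: "EXd n Q \<subseteq> box n (length Q)"
proof
  fix p assume p: "p \<in> EXd n Q"
  obtain x y z where pe: "p = (x,y,z)" by (cases p) auto
  show "p \<in> box n (length Q)" using p unfolding pe EXd_def
    by (auto dest!: FXb FYb FZb simp: box_def)
qed
lemma EY_box: "EYd n Q \<subseteq> box n (length Q)"
proof
  fix p assume p: "p \<in> EYd n Q"
  obtain x y z where pe: "p = (x,y,z)" by (cases p) auto
  show "p \<in> box n (length Q)" using p unfolding pe EYd_def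
    by (auto dest!: FXb FYb FZb simp: box_def)
qed
lemma EZ_box: "EZd n Q \<subseteq> box n (length Q)"
proof
  fix p assume p: "p \<in> EZd n Q"
  obtain x y z where pe: "p = (x,y,z)" by (cases p) auto
  show "p \<in> box n (length Q)" using p unfolding pe EZd_def
    by (auto dest!: FXb FYb FZb simp: box_def)
qed
lemma VV_box: "VV n Q \<subseteq> box n (length Q)"
proof
  fix p assume p: "p \<in> VV n Q"
  obtain x y z where pe: "p = (x,y,z)" by (cases p) auto
  show "p \<in> box n (length Q)" using p unfolding pe VV_def
    by (auto dest!: FXb FYb FZb simp: box_def)
qed

end

lemma xf_inj: "xf a b c = xf a' b' c' \<Longrightarrow> (a,b,c) = (a',b',c')"
proof -
  assume h: "xf a b c = xf a' b' c'"
  have "(a,b,c) \<in> xf a b c" "(a',b',c') \<in> xf a' b' c'" by (simp_all add: mem_xf)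
  then have "(a,b,c) \<in> xf a' b' c'" "(a',b',c') \<in> xf a b c" using h by simp_all
  then show ?thesis by (auto simp: mem_xf)
qed


lemma yf_inj: "yf a b c = yf a' b' c' \<Longrightarrow> (a,b,c) = (a',b',c')"
proof -
  assume h: "yf a b c = yf a' b' c'"
  have "(a,b,c) \<in> yf a b c" "(a',b',c') \<in> yf a' b' c'" by (simp_all add: mem_yf)
  then have "(a,b,c) \<in> yf a' b' c'" "(a',b',c') \<in> yf a b c" using h by simp_all
  then show ?thesis by (auto simp: mem_yf)
qed
lemma zf_inj: "zf a b c = zf a' b' c' \<Longrightarrow> (a,b,c) = (a',b',c')"
proof -
  assume h: "zf a b c = zf a' b' c'"
  have "(a,b,c) \<in> zf a b c" "(a',b',c') \<in> zf a' b' c'" by (simp_all add: mem_zf)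
  then have "(a,b,c) \<in> zf a' b' c'" "(a',b',c') \<in> zf a b c" using h by simp_all
  then show ?thesis by (auto simp: mem_zf)
qed
lemma xf_yf: "xf a b c \<noteq> yf a' b' c'"
proof
  assume h: "xf a b c = yf a' b' c'"
  have "(a,b,c) \<in> xf a b c" "(a,b+1,c) \<in> xf a b c" by (simp_all add: mem_xf)
  then have "(a,b,c) \<in> yf a' b' c'" "(a,b+1,c) \<in> yf a' b' c'" using h by simp_all
  then show False by (auto simp: mem_yf)
qed
lemma xf_zf: "xf a b c \<noteq> zf a' b' c'"
proof
  assume h: "xf a b c = zf a' b' c'"
  have "(a,b,c) \<in> xf a b c" "(a,b,c+1) \<in> xf a b c" by (simp_all add: mem_xf)
  then have "(a,b,c) \<in> zf a' b' c'" "(a,b,c+1) \<in> zf a' b' c'" using h by simp_all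
  then show False by (auto simp: mem_zf)
qed
lemma yf_zf: "yf a b c \<noteq> zf a' b' c'"
proof
  assume h: "yf a b c = zf a' b' c'"
  have "(a,b,c) \<in> yf a b c" "(a,b,c+1) \<in> yf a b c" by (simp_all add: mem_yf)
  then have "(a,b,c) \<in> zf a' b' c'" "(a,b,c+1) \<in> zf a' b' c'" using h by simp_all
  then show False by (auto simp: mem_zf)
qed

lemma xs_inj: "xs a b c = xs a' b' c' \<Longrightarrow> (a,b,c) = (a',b',c')"
  unfolding xs_def by (auto simp: doubleton_eq_iff)
lemma ys_inj: "ys a b c = ys a' b' c' \<Longrightarrow> (a,b,c) = (a',b',c')"
  unfolding ys_def by (auto simp: doubleton_eq_iff)
lemma zs_inj: "zs a b c = zs a' b' c' \<Longrightarrow> (a,b,c) = (a',b',c')"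
  unfolding zs_def by (auto simp: doubleton_eq_iff)
lemma xs_ys: "xs a b c \<noteq> ys a' b' c'"
  unfolding xs_def ys_def by (auto simp: doubleton_eq_iff)
lemma xs_zs: "xs a b c \<noteq> zs a' b' c'"
  unfolding xs_def zs_def by (auto simp: doubleton_eq_iff)
lemma ys_zs: "ys a b c \<noteq> zs a' b' c'"
  unfolding ys_def zs_def by (auto simp: doubleton_eq_iff)

lemma card3:
  fixes f g h :: "point \<Rightarrow> 'a"
  assumes "finite A" "finite B" "finite C"
    "\<And>p q. f p = f q \<Longrightarrow> p = q" "\<And>p q. g p = g q \<Longrightarrow> p = q" "\<And>p q. h p = h q \<Longrightarrow> p = q"
    "\<And>p q. f p \<noteq> g q" "\<And>p q. f p \<noteq> h q" "\<And>p q. g p \<noteq> h q"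
  shows "card (f ` A \<union> g ` B \<union> h ` C) = card A + card B + card C"
proof -
  have i: "inj_on f A" "inj_on g B" "inj_on h C" using assms(4-6) by (auto simp: inj_on_def)
  have d: "(f ` A \<union> g ` B) \<inter> h ` C = {}"
  proof (rule ccontr)
    assume "(f ` A \<union> g ` B) \<inter> h ` C \<noteq> {}"
    then obtain p q where "f p = h q \<or> g p = h q" by blast
    then show False using assms(8,9) by blast
  qed
  have "card (f ` A \<union> g ` B \<union> h ` C) = card (f ` A \<union> g ` B) + card (h ` C)"
    by (rule card_Un_disjoint) (use assms d in auto)
  also have "card (f ` A \<union> g ` B) = card (f ` A) + card (g ` B)"
    by (rule card_Un_disjoint) (use assms in auto)
  finally show ?thesis using i by (simp add: card_image)
qed

lemma card_faces: assumes "okQ n Q"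
  shows "card (bfaces n Q) = card (FX n Q) + card (FY n Q) + card (FZ n Q)"
  unfolding bfaces_eq
  apply (rule card3)
  using finite_subset[OF FX_box[OF assms] finite_box] finite_subset[OF FY_box[OF assms] finite_box]
    finite_subset[OF FZ_box[OF assms] finite_box]
  by (auto dest: xf_inj yf_inj zf_inj simp: xf_yf xf_zf yf_zf)

lemma card_edges: assumes "okQ n Q"
  shows "card (bedges n Q) = card (EXd n Q) + card (EYd n Q) + card (EZd n Q)"
  unfolding bedges_eq
  apply (rule card3)
  using finite_subset[OF EX_box[OF assms] finite_box] finite_subset[OF EY_box[OF assms] finite_box]
    finite_subset[OF EZ_box[OF assms] finite_box]
  by (auto dest: xs_inj ys_inj zs_inj simp: xs_ys xs_zs ys_zs)

lemma euler_eq: assumes "okQ n Q"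
  shows "euler_char n Q = int (card (VV n Q)) - (int (card (EXd n Q)) + int (card (EYd n Q)) + int (card (EZd n Q)))
     + (int (card (FX n Q)) + int (card (FY n Q)) + int (card (FZ n Q)))"
  unfolding euler_char_def bverts_eq card_faces[OF assms] card_edges[OF assms] by simp



definition R0 :: "nat \<Rightarrow> int set" where "R0 n = {0..<int n}"
definition Sz :: "config \<Rightarrow> int \<Rightarrow> int set" where
  "Sz Q z = {y. 0 \<le> y \<and> 0 \<le> z \<and> nat z < length Q \<and> nat y \<in> Q ! nat z}"
definition Xs :: "nat \<Rightarrow> config \<Rightarrow> int \<Rightarrow> int set" where "Xs n Q z = (if even z then R0 n else Sz Q z)"
definition Ys :: "nat \<Rightarrow> config \<Rightarrow> int \<Rightarrow> int set" where "Ys n Q z = (if even z then Sz Q z else R0 n)"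

lemma occ: "(a,b,c) \<in> cubes n Q \<longleftrightarrow> a \<in> Xs n Q c \<and> b \<in> Ys n Q c"
proof (cases "0 \<le> c")
  case True
  then have e: "even (nat c) \<longleftrightarrow> even c" by (simp add: even_nat_iff)
  show ?thesis unfolding cubes_def Xs_def Ys_def Sz_def R0_def using True e by auto
next
  case False
  then show ?thesis unfolding cubes_def Xs_def Ys_def Sz_def R0_def by auto
qed

lemma Sz_sub: "okQ n Q \<Longrightarrow> Sz Q z \<subseteq> R0 n"
  unfolding okQ_def Sz_def R0_def by force

lemma finite_R0: "finite (R0 n)" unfolding R0_def by simp
lemma finite_Sz: "okQ n Q \<Longrightarrow> finite (Sz Q z)" using finite_subset[OF Sz_sub finite_R0] .

definition an :: "int set \<Rightarrow> int set" where "an S = {x. x - 1 \<in> S \<or> x \<in> S}"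
definition al :: "int set \<Rightarrow> int set" where "al S = {x. x - 1 \<in> S \<and> x \<in> S}"
definition rs :: "int set \<Rightarrow> int set" where "rs S = {x. x \<in> S \<and> x - 1 \<notin> S}"

lemma an_mono: "S \<subseteq> T \<Longrightarrow> an S \<subseteq> an T" unfolding an_def by auto
lemma al_mono: "S \<subseteq> T \<Longrightarrow> al S \<subseteq> al T" unfolding al_def by auto

lemma card_al_rs: assumes "finite S" shows "card (al S) + card (rs S) = card S"
proof -
  have "S = al S \<union> rs S" unfolding al_def rs_def by auto
  moreover have "al S \<inter> rs S = {}" unfolding al_def rs_def by auto
  moreover have "finite (al S)" "finite (rs S)" using assms unfolding al_def rs_def by auto
  ultimately show ?thesis by (metis card_Un_disjoint)
qed

lemma card_an: assumes "finite S" shows "card (an S) = card S + card (rs S)"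
proof -
  define E where "E = {x. x - 1 \<in> S \<and> x \<notin> S}"
  have fE: "finite E"
  proof -
    have "E \<subseteq> (\<lambda>x. x + 1) ` S" unfolding E_def by (auto intro: image_eqI[of _ _ "_ - 1"])
    then show ?thesis using assms finite_subset by blast
  qed
  have fal: "finite (al S)" using assms unfolding al_def by auto
  have "(\<lambda>x. x + 1) ` S = al S \<union> E" unfolding al_def E_def by (auto intro: image_eqI[of _ _ "_ - 1"])
  moreover have "al S \<inter> E = {}" unfolding al_def E_def by auto
  moreover have "card ((\<lambda>x::int. x + 1) ` S) = card S" by (rule card_image) (auto simp: inj_on_def)
  ultimately have c1: "card S = card (al S) + card E" using fE fal by (metis card_Un_disjoint)
  have "an S = S \<union> E" unfolding an_def E_def by auto
  moreover have "S \<inter> E = {}" unfolding E_def by auto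
  ultimately have "card (an S) = card S + card E" using assms fE by (simp add: card_Un_disjoint)
  then show ?thesis using c1 card_al_rs[OF assms] by linarith
qed

lemma finite_an: "finite S \<Longrightarrow> finite (an S)"
proof -
  assume f: "finite S"
  have "an S \<subseteq> S \<union> (\<lambda>x. x + 1) ` S" unfolding an_def by (auto intro: image_eqI[of _ _ "_ - 1"])
  then show ?thesis using f finite_subset by blast
qed
lemma finite_al: "finite S \<Longrightarrow> finite (al S)" unfolding al_def by auto

lemma card_mix:
  fixes P1 Q1 P2 Q2 R T :: "int set"
  assumes "finite P1" "finite Q1" "finite P2" "finite Q2" "R \<subseteq> P1" "T \<subseteq> Q1"
  shows "int (card {(x,y). ((x \<in> P1 \<and> y \<in> Q1) \<or> (x \<in> P2 \<and> y \<in> Q2)) \<and> \<not> (x \<in> R \<and> y \<in> T)})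
     = int (card P1) * int (card Q1) + int (card P2) * int (card Q2) - int (card (P1 \<inter> P2)) * int (card (Q1 \<inter> Q2))
       - int (card R) * int (card T)"
proof -
  have eq: "{(x,y). ((x \<in> P1 \<and> y \<in> Q1) \<or> (x \<in> P2 \<and> y \<in> Q2)) \<and> \<not> (x \<in> R \<and> y \<in> T)} = (P1 \<times> Q1 \<union> P2 \<times> Q2) - R \<times> T"
    by auto
  have sub: "R \<times> T \<subseteq> P1 \<times> Q1 \<union> P2 \<times> Q2" using assms(5,6) by auto
  have fU: "finite (P1 \<times> Q1 \<union> P2 \<times> Q2)" using assms(1-4) by auto
  have cU: "card (P1 \<times> Q1 \<union> P2 \<times> Q2) + card ((P1 \<times> Q1) \<inter> (P2 \<times> Q2)) = card (P1 \<times> Q1) + card (P2 \<times> Q2)"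
    using card_Un_Int[of "P1 \<times> Q1" "P2 \<times> Q2"] assms(1-4) by auto
  have ci: "(P1 \<times> Q1) \<inter> (P2 \<times> Q2) = (P1 \<inter> P2) \<times> (Q1 \<inter> Q2)" by auto
  have cD: "card ((P1 \<times> Q1 \<union> P2 \<times> Q2) - R \<times> T) = card (P1 \<times> Q1 \<union> P2 \<times> Q2) - card (R \<times> T)"
    by (rule card_Diff_subset) (use sub fU finite_subset in auto)
  have le: "card (R \<times> T) \<le> card (P1 \<times> Q1 \<union> P2 \<times> Q2)" by (rule card_mono[OF fU sub])
  have cU': "card (P1 \<times> Q1 \<union> P2 \<times> Q2) + card (P1 \<inter> P2) * card (Q1 \<inter> Q2) = card P1 * card Q1 + card P2 * card Q2"
    using cU unfolding ci card_cartesian_product .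
  then have cU'': "int (card (P1 \<times> Q1 \<union> P2 \<times> Q2)) + int (card (P1 \<inter> P2)) * int (card (Q1 \<inter> Q2)) = int (card P1) * int (card Q1) + int (card P2) * int (card Q2)"
    by (metis of_nat_add of_nat_mult)
  have le': "int (card R) * int (card T) \<le> int (card (P1 \<times> Q1 \<union> P2 \<times> Q2))" using le unfolding card_cartesian_product
    by (metis of_nat_le_iff of_nat_mult)
  show ?thesis unfolding eq cD using cU'' le' le by (simp add: of_nat_diff card_cartesian_product)
qed



lemma card_slices:
  fixes T :: "point set"
  assumes "finite T" "\<And>x y z. (x,y,z) \<in> T \<Longrightarrow> 0 \<le> z \<and> z \<le> int L"
  shows "card T = (\<Sum>i\<in>{0..L}. card {(x,y). (x,y,int i) \<in> T})"
proof -
  let ?f = "\<lambda>(i::nat,(x::int,y::int)). (x,y,int i)"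
  let ?S = "SIGMA i:{0..L}. {(x,y). (x,y,int i) \<in> T}"
  have e: "T = ?f ` ?S"
  proof
    show "T \<subseteq> ?f ` ?S"
    proof
      fix p assume p: "p \<in> T"
      obtain x y z where pe: "p = (x,y,z)" by (cases p) auto
      have z: "0 \<le> z" "z \<le> int L" using assms(2) p pe by auto
      then have "(nat z, (x,y)) \<in> ?S" using p pe by auto
      moreover have "p = ?f (nat z, (x,y))" using pe z by auto
      ultimately show "p \<in> ?f ` ?S" by blast
    qed
  qed auto
  have inj: "inj_on ?f ?S" by (auto simp: inj_on_def)
  have fin: "\<forall>i\<in>{0..L}. finite {(x,y). (x,y,int i) \<in> T}"
  proof
    fix i
    have "{(x,y). (x,y,int i) \<in> T} \<subseteq> (\<lambda>(x,y,z). (x,y)) ` T"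
    proof (rule subsetI)
      fix p assume "p \<in> {(x,y). (x,y,int i) \<in> T}"
      then obtain a b where "p = (a,b)" "(a,b,int i) \<in> T" by auto
      then show "p \<in> (\<lambda>(x,y,z). (x,y)) ` T" by (auto intro: rev_image_eqI[of "(a,b,int i)"])
    qed
    then show "finite {(x,y). (x,y,int i) \<in> T}" using assms(1) finite_subset by blast
  qed
  have "card (?f ` ?S) = card ?S" by (rule card_image[OF inj])
  then have "card T = card ?S" using e by simp
  also have "\<dots> = (\<Sum>i\<in>{0..L}. card {(x,y). (x,y,int i) \<in> T})" using fin by (simp add: card_SigmaI)
  finally show ?thesis .
qed

context fixes n :: nat and Q :: config and z :: int assumes ok: "okQ n Q" begin

abbreviation "X \<equiv> Xs n Q z"
abbreviation "Y \<equiv> Ys n Q z"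
abbreviation "X' \<equiv> Xs n Q (z - 1)"
abbreviation "Y' \<equiv> Ys n Q (z - 1)"

lemma finX: "finite (Xs n Q w)" "finite (Ys n Q w)"
  unfolding Xs_def Ys_def using finite_R0 finite_Sz[OF ok] by auto

lemma slFX: "int (card {(x,y). (x,y,z) \<in> FX n Q}) = int (card (an X)) * int (card Y) - int (card (al X)) * int (card Y)"
proof -
  have "{(x,y). (x,y,z) \<in> FX n Q} = {(x,y). ((x \<in> an X \<and> y \<in> Y) \<or> (x \<in> an X \<and> y \<in> Y)) \<and> \<not> (x \<in> al X \<and> y \<in> Y)}"
    unfolding FX_def occ an_def al_def by auto
  then show ?thesis using card_mix[of "an X" Y "an X" Y "al X" Y] finX finite_an
    by (simp add: al_def an_def subset_iff)
qed

lemma slFY: "int (card {(x,y). (x,y,z) \<in> FY n Q}) = int (card X) * int (card (an Y)) - int (card X) * int (card (al Y))"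
proof -
  have "{(x,y). (x,y,z) \<in> FY n Q} = {(x,y). ((x \<in> X \<and> y \<in> an Y) \<or> (x \<in> X \<and> y \<in> an Y)) \<and> \<not> (x \<in> X \<and> y \<in> al Y)}"
    unfolding FY_def occ an_def al_def by auto
  then show ?thesis using card_mix[of X "an Y" X "an Y" X "al Y"] finX finite_an
    by (simp add: al_def an_def subset_iff)
qed

lemma slFZ: "int (card {(x,y). (x,y,z) \<in> FZ n Q}) = int (card X') * int (card Y') + int (card X) * int (card Y)
   - int (card (X' \<inter> X)) * int (card (Y' \<inter> Y)) - int (card (X' \<inter> X)) * int (card (Y' \<inter> Y))"
proof -
  have "{(x,y). (x,y,z) \<in> FZ n Q} = {(x,y). ((x \<in> X' \<and> y \<in> Y') \<or> (x \<in> X \<and> y \<in> Y)) \<and> \<not> (x \<in> X' \<inter> X \<and> y \<in> Y' \<inter> Y)}"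
    unfolding FZ_def occ by auto
  then show ?thesis using card_mix[of X' Y' X Y "X' \<inter> X" "Y' \<inter> Y"] finX
    by simp
qed

lemma slEZ: "int (card {(x,y). (x,y,z) \<in> EZd n Q}) = int (card (an X)) * int (card (an Y)) - int (card (al X)) * int (card (al Y))"
proof -
  have "{(x,y). (x,y,z) \<in> EZd n Q} = {(x,y). ((x \<in> an X \<and> y \<in> an Y) \<or> (x \<in> an X \<and> y \<in> an Y)) \<and> \<not> (x \<in> al X \<and> y \<in> al Y)}"
    unfolding EZd_def FX_def FY_def occ an_def al_def by auto
  then show ?thesis using card_mix[of "an X" "an Y" "an X" "an Y" "al X" "al Y"] finX finite_an
    by (simp add: al_def an_def subset_iff)
qed

lemma slEX: "int (card {(x,y). (x,y,z) \<in> EXd n Q}) = int (card X') * int (card (an Y')) + int (card X) * int (card (an Y))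
   - int (card (X' \<inter> X)) * int (card (an Y' \<inter> an Y)) - int (card (X' \<inter> X)) * int (card (al Y' \<inter> al Y))"
proof -
  have "{(x,y). (x,y,z) \<in> EXd n Q} = {(x,y). ((x \<in> X' \<and> y \<in> an Y') \<or> (x \<in> X \<and> y \<in> an Y)) \<and> \<not> (x \<in> X' \<inter> X \<and> y \<in> al Y' \<inter> al Y)}"
    unfolding EXd_def FY_def FZ_def occ an_def al_def by auto
  then show ?thesis using card_mix[of X' "an Y'" X "an Y" "X' \<inter> X" "al Y' \<inter> al Y"] finX finite_an
    by (simp add: al_def an_def subset_iff)
qed

lemma slEY: "int (card {(x,y). (x,y,z) \<in> EYd n Q}) = int (card (an X')) * int (card Y') + int (card (an X)) * int (card Y)
   - int (card (an X' \<inter> an X)) * int (card (Y' \<inter> Y)) - int (card (al X' \<inter> al X)) * int (card (Y' \<inter> Y))"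
proof -
  have "{(x,y). (x,y,z) \<in> EYd n Q} = {(x,y). ((x \<in> an X' \<and> y \<in> Y') \<or> (x \<in> an X \<and> y \<in> Y)) \<and> \<not> (x \<in> al X' \<inter> al X \<and> y \<in> Y' \<inter> Y)}"
    unfolding EYd_def FX_def FZ_def occ an_def al_def by auto
  then show ?thesis using card_mix[of "an X'" Y' "an X" Y "al X' \<inter> al X" "Y' \<inter> Y"] finX finite_an
    by (simp add: al_def an_def subset_iff)
qed

lemma slVV: "int (card {(x,y). (x,y,z) \<in> VV n Q}) = int (card (an X')) * int (card (an Y')) + int (card (an X)) * int (card (an Y))
   - int (card (an X' \<inter> an X)) * int (card (an Y' \<inter> an Y)) - int (card (al X' \<inter> al X)) * int (card (al Y' \<inter> al Y))"
proof -
  have "{(x,y). (x,y,z) \<in> VV n Q} = {(x,y). ((x \<in> an X' \<and> y \<in> an Y') \<or> (x \<in> an X \<and> y \<in> an Y)) \<and> \<not> (x \<in> al X' \<inter> al X \<and> y \<in> al Y' \<inter> al Y)}"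
    unfolding VV_def FX_def FY_def FZ_def occ an_def al_def by auto
  then show ?thesis using card_mix[of "an X'" "an Y'" "an X" "an Y" "al X' \<inter> al X" "al Y' \<inter> al Y"] finX finite_an
    by (simp add: al_def an_def subset_iff)
qed

end



lemma rs_R0: "1 \<le> n \<Longrightarrow> rs (R0 n) = {0}" unfolding rs_def R0_def by auto

lemma cardR0: "1 \<le> n \<Longrightarrow> int (card (R0 n)) = int n" "1 \<le> n \<Longrightarrow> int (card (rs (R0 n))) = 1"
  by (simp add: R0_def, simp add: rs_R0)

lemma card_an_i: "finite S \<Longrightarrow> int (card (an S)) = int (card S) + int (card (rs S))"
  using card_an by simp
lemma card_al_i: "finite S \<Longrightarrow> int (card (al S)) = int (card S) - int (card (rs S))"
  using card_al_rs by (metis add_diff_cancel_right' of_nat_add)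

lemma sub_inter: assumes "S \<subseteq> T" shows "S \<inter> T = S" "T \<inter> S = S" "an S \<inter> an T = an S" "an T \<inter> an S = an S" "al S \<inter> al T = al S" "al T \<inter> al S = al S"
  using an_mono[OF assms] al_mono[OF assms] assms by auto

definition val :: "nat \<Rightarrow> config \<Rightarrow> int \<Rightarrow> int" where
  "val n Q z = int (card {(x,y). (x,y,z) \<in> VV n Q}) - int (card {(x,y). (x,y,z) \<in> EXd n Q})
     - int (card {(x,y). (x,y,z) \<in> EYd n Q}) - int (card {(x,y). (x,y,z) \<in> EZd n Q})
     + int (card {(x,y). (x,y,z) \<in> FX n Q}) + int (card {(x,y). (x,y,z) \<in> FY n Q}) + int (card {(x,y). (x,y,z) \<in> FZ n Q})"

lemma val_eq: assumes ok: "okQ n Q" and n: "1 \<le> n"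
  shows "val n Q z = int (card (rs (Sz Q (z-1)))) + int (card (rs (Sz Q z))) - 2 * int (card (rs (Sz Q (z-1)))) * int (card (rs (Sz Q z)))"
proof -
  define S where "S = Sz Q z"
  define S' where "S' = Sz Q (z-1)"
  have fS: "finite S" "finite S'" unfolding S_def S'_def using finite_Sz[OF ok] by auto
  have sub: "S \<subseteq> R0 n" "S' \<subseteq> R0 n" unfolding S_def S'_def using Sz_sub[OF ok] by auto
  note i1 = sub_inter[OF sub(1)] and i2 = sub_inter[OF sub(2)]
  note cards = card_an_i[OF fS(1)] card_al_i[OF fS(1)] card_an_i[OF fS(2)] card_al_i[OF fS(2)]
     card_an_i[OF finite_R0] card_al_i[OF finite_R0] cardR0[OF n]
  note sl = slVV[OF ok, of z] slEX[OF ok, of z] slEY[OF ok, of z] slEZ[OF ok, of z] slFX[OF ok, of z] slFY[OF ok, of z] slFZ[OF ok, of z]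
  show ?thesis
  proof (cases "even z")
    case True
    then have x: "Xs n Q z = R0 n" "Ys n Q z = S" "Xs n Q (z-1) = S'" "Ys n Q (z-1) = R0 n"
      unfolding Xs_def Ys_def S_def S'_def by auto
    show ?thesis unfolding val_def sl x i1 i2 unfolding S_def[symmetric] S'_def[symmetric] cards
      by (simp add: algebra_simps)
  next
    case False
    then have x: "Xs n Q z = S" "Ys n Q z = R0 n" "Xs n Q (z-1) = R0 n" "Ys n Q (z-1) = S'"
      unfolding Xs_def Ys_def S_def S'_def by auto
    show ?thesis unfolding val_def sl x i1 i2 unfolding S_def[symmetric] S'_def[symmetric] cards
      by (simp add: algebra_simps)
  qed
qed



context fixes n :: nat and Q :: config assumes ok: "okQ n Q" begin

lemma FXt: "(a,b,c) \<in> FX n Q \<Longrightarrow> 0 \<le> c \<and> c < int (length Q)" using FX_bounds[OF ok] by blast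
lemma FYt: "(a,b,c) \<in> FY n Q \<Longrightarrow> 0 \<le> c \<and> c < int (length Q)" using FY_bounds[OF ok] by blast
lemma FZt: "(a,b,c) \<in> FZ n Q \<Longrightarrow> 0 \<le> c \<and> c \<le> int (length Q)" using FZ_bounds[OF ok] by blast

lemma zbs:
  "(x,y,z) \<in> VV n Q \<Longrightarrow> 0 \<le> z \<and> z \<le> int (length Q)"
  "(x,y,z) \<in> EXd n Q \<Longrightarrow> 0 \<le> z \<and> z \<le> int (length Q)"
  "(x,y,z) \<in> EYd n Q \<Longrightarrow> 0 \<le> z \<and> z \<le> int (length Q)"
  "(x,y,z) \<in> EZd n Q \<Longrightarrow> 0 \<le> z \<and> z \<le> int (length Q)"
  "(x,y,z) \<in> FX n Q \<Longrightarrow> 0 \<le> z \<and> z \<le> int (length Q)"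
  "(x,y,z) \<in> FY n Q \<Longrightarrow> 0 \<le> z \<and> z \<le> int (length Q)"
  "(x,y,z) \<in> FZ n Q \<Longrightarrow> 0 \<le> z \<and> z \<le> int (length Q)"
  unfolding VV_def EXd_def EYd_def EZd_def
  by (auto dest!: FXt FYt FZt)

lemma fins: "finite (VV n Q)" "finite (EXd n Q)" "finite (EYd n Q)" "finite (EZd n Q)"
  "finite (FX n Q)" "finite (FY n Q)" "finite (FZ n Q)"
  using finite_subset[OF VV_box[OF ok] finite_box] finite_subset[OF EX_box[OF ok] finite_box]
    finite_subset[OF EY_box[OF ok] finite_box] finite_subset[OF EZ_box[OF ok] finite_box]
    finite_subset[OF FX_box[OF ok] finite_box] finite_subset[OF FY_box[OF ok] finite_box]
    finite_subset[OF FZ_box[OF ok] finite_box] by auto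

lemma isl: "finite (T :: point set) \<Longrightarrow> (\<And>x y z. (x,y,z) \<in> T \<Longrightarrow> 0 \<le> z \<and> z \<le> int (length Q)) \<Longrightarrow>
  int (card T) = (\<Sum>i\<in>{0..length Q}. int (card {(x,y). (x,y,int i) \<in> T}))"
  by (subst card_slices[of T "length Q"]) auto

lemma euler_sum: "euler_char n Q = (\<Sum>i\<in>{0..length Q}. val n Q (int i))"
proof -
  have e1: "int (card (VV n Q)) = (\<Sum>i\<in>{0..length Q}. int (card {(x,y). (x,y,int i) \<in> VV n Q}))"
    by (rule isl[OF fins(1)]) (rule zbs(1))
  have e2: "int (card (EXd n Q)) = (\<Sum>i\<in>{0..length Q}. int (card {(x,y). (x,y,int i) \<in> EXd n Q}))"
    by (rule isl[OF fins(2)]) (rule zbs(2))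
  have e3: "int (card (EYd n Q)) = (\<Sum>i\<in>{0..length Q}. int (card {(x,y). (x,y,int i) \<in> EYd n Q}))"
    by (rule isl[OF fins(3)]) (rule zbs(3))
  have e4: "int (card (EZd n Q)) = (\<Sum>i\<in>{0..length Q}. int (card {(x,y). (x,y,int i) \<in> EZd n Q}))"
    by (rule isl[OF fins(4)]) (rule zbs(4))
  have e5: "int (card (FX n Q)) = (\<Sum>i\<in>{0..length Q}. int (card {(x,y). (x,y,int i) \<in> FX n Q}))"
    by (rule isl[OF fins(5)]) (rule zbs(5))
  have e6: "int (card (FY n Q)) = (\<Sum>i\<in>{0..length Q}. int (card {(x,y). (x,y,int i) \<in> FY n Q}))"
    by (rule isl[OF fins(6)]) (rule zbs(6))
  have e7: "int (card (FZ n Q)) = (\<Sum>i\<in>{0..length Q}. int (card {(x,y). (x,y,int i) \<in> FZ n Q}))"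
    by (rule isl[OF fins(7)]) (rule zbs(7))
  show ?thesis unfolding euler_eq[OF ok] val_def e1 e2 e3 e4 e5 e6 e7 by (simp add: sum.distrib sum_subtractf)
qed

end

definition cn :: "config \<Rightarrow> nat \<Rightarrow> int" where "cn Q i = int (card (rs (Sz Q (int i))))"

lemma Sz_neg: "Sz Q (-1) = {}" unfolding Sz_def by auto
lemma rs_empty: "rs {} = {}" unfolding rs_def by auto

lemma sum_val: assumes "okQ n Q" "1 \<le> n"
  shows "(\<Sum>i\<in>{0..m}. val n Q (int i)) = 2 * (\<Sum>i<m. cn Q i) + cn Q m - 2 * (\<Sum>i<m. cn Q i * cn Q (Suc i))"
proof (induction m)
  case 0
  then show ?case using val_eq[OF assms, of 0] by (simp add: Sz_neg rs_empty cn_def)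
next
  case (Suc m)
  have "val n Q (int (Suc m)) = cn Q m + cn Q (Suc m) - 2 * cn Q m * cn Q (Suc m)"
    using val_eq[OF assms, of "int (Suc m)"] by (simp add: cn_def)
  then show ?case using Suc by (simp add: sum.atLeast0_atMost_Suc)
qed

lemma cn_L: "cn Q (length Q) = 0" unfolding cn_def Sz_def rs_def by simp

lemma euler_final: assumes "okQ n Q" "1 \<le> n"
  shows "euler_char n Q = 2 * (\<Sum>i<length Q. cn Q i) - 2 * (\<Sum>i<length Q. cn Q i * cn Q (Suc i))"
  using euler_sum[OF assms(1)] sum_val[OF assms, of "length Q"] cn_L by simp



lemma rs_le: "finite S \<Longrightarrow> card (rs S) \<le> card S"
  by (rule card_mono) (auto simp: rs_def)

lemma rs_half: assumes "S \<subseteq> R0 n" "even n" shows "2 * card (rs S) \<le> n"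
proof -
  have fS: "finite S" using assms(1) finite_R0 finite_subset by blast
  have "(\<lambda>x. x - 1) ` (rs S - {0}) \<subseteq> R0 n - S"
    using assms(1) unfolding rs_def R0_def by auto
  moreover have "inj_on (\<lambda>x::int. x - 1) (rs S - {0})" by (auto simp: inj_on_def)
  ultimately have "card (rs S - {0}) \<le> card (R0 n - S)"
    by (metis card_image card_mono finite_Diff finite_R0)
  moreover have "card (R0 n - S) = n - card S" using assms(1) by (simp add: card_Diff_subset fS R0_def)
  moreover have "card (rs S) \<le> card (rs S - {0}) + 1"
  proof (cases "0 \<in> rs S")
    case True
    have "finite (rs S)" using fS unfolding rs_def by auto
    then show ?thesis using card_Suc_Diff1[OF _ True] by simp
  qed simp
  moreover have "card S \<le> n" using card_mono[OF finite_R0 assms(1)] by (simp add: R0_def)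
  ultimately have "2 * card (rs S) \<le> n + 1" using rs_le[OF fS] by linarith
  then show ?thesis using assms(2) by presburger
qed

lemma rs_pos: assumes "finite S" "S \<noteq> {}" shows "1 \<le> card (rs S)"
proof -
  have m1: "Min S \<in> S" using Min_in[OF assms] .
  have m2: "Min S - 1 \<notin> S"
  proof
    assume "Min S - 1 \<in> S"
    then have "Min S \<le> Min S - 1" using Min_le[OF assms(1)] by blast
    then show False by simp
  qed
  have "Min S \<in> rs S" using m1 m2 unfolding rs_def by simp
  moreover have "finite (rs S)" using assms(1) unfolding rs_def by auto
  ultimately show ?thesis by (metis One_nat_def Suc_leI card_gt_0_iff empty_iff)
qed

lemma Sz_nat: "i < length Q \<Longrightarrow> Sz Q (int i) = int ` (Q ! i)"
  unfolding Sz_def by (auto intro: image_eqI[of _ _ "nat _"])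

lemma card_Sz: "i < length Q \<Longrightarrow> card (Sz Q (int i)) = card (Q ! i)"
  unfolding Sz_nat by (simp add: card_image)

lemma Sz_full: "i < length Q \<Longrightarrow> Q ! i = {0..<n} \<Longrightarrow> Sz Q (int i) = R0 n"
  unfolding Sz_nat R0_def by (auto simp: image_iff intro!: bexI[of _ "nat _"])

lemma comb:
  fixes c a :: "nat \<Rightarrow> int" and m :: nat and n k :: int
  assumes "c (m+3) = 0" "c (m+1) = 1" "\<And>i. i < m+3 \<Longrightarrow> 1 \<le> c i" "\<And>i. i < m+3 \<Longrightarrow> 2 * c i \<le> n"
    "\<And>i. i < m \<Longrightarrow> c i \<le> a i" "(\<Sum>i<m. a i) \<le> n * (k - 2)" "2 \<le> n"
  shows "2 - 2 * (\<Sum>i<m+3. c i) + 2 * (\<Sum>i<m+3. c i * c (Suc i)) \<le> n * (n - 2) * (k - 2)"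
proof -
  have split: "(\<Sum>i<m+3. c i * c (Suc i) - c i) = (\<Sum>i<m. c i * c (Suc i) - c i) - 1"
    using assms(1,2) by (simp add: numeral_3_eq_3 algebra_simps)
  have t: "2 * (c i * c (Suc i) - c i) \<le> (n - 2) * a i" if "i < m" for i
  proof -
    have h1: "0 \<le> c i" using assms(3)[of i] that by simp
    have h2: "0 \<le> 2 * c (Suc i) - 2" "2 * c (Suc i) - 2 \<le> n - 2" using assms(3)[of "Suc i"] assms(4)[of "Suc i"] that by auto
    note a5 = assms(5)[OF that]
    have "2 * (c i * c (Suc i) - c i) = c i * (2 * c (Suc i) - 2)" by (simp add: algebra_simps)
    also have "\<dots> \<le> a i * (n - 2)" by (rule mult_mono[OF a5 h2(2)]) (use h1 h2 a5 in auto)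
    finally show ?thesis by (simp add: algebra_simps)
  qed
  have "2 * (\<Sum>i<m. c i * c (Suc i) - c i) \<le> (\<Sum>i<m. (n - 2) * a i)"
    unfolding sum_distrib_left by (rule sum_mono) (use t in auto)
  also have "\<dots> = (n - 2) * (\<Sum>i<m. a i)" by (simp add: sum_distrib_left)
  also have "\<dots> \<le> (n - 2) * (n * (k - 2))" using assms(6,7) by (simp add: mult_left_mono)
  finally have "2 * (\<Sum>i<m. c i * c (Suc i) - c i) \<le> (n - 2) * (n * (k - 2))" .
  moreover have "2 - 2 * (\<Sum>i<m+3. c i) + 2 * (\<Sum>i<m+3. c i * c (Suc i)) = 2 + 2 * (\<Sum>i<m+3. c i * c (Suc i) - c i)"
    by (simp add: sum_subtractf algebra_simps)
  ultimately show ?thesis unfolding split by (simp add: algebra_simps)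
qed



definition jinv :: "nat \<Rightarrow> nat \<Rightarrow> config \<Rightarrow> bool" where
  "jinv n k Q \<longleftrightarrow> okQ n Q \<and> sum_list (map card Q) = n * k \<and> 3 \<le> length Q \<and>
     Q ! (length Q - 2) = {0..<n} \<and> n \<le> card (Q ! (length Q - 3)) + card (last Q)"

lemma jinv_init: "3 \<le> k \<Longrightarrow> jinv n k (initial_config n k)"
  unfolding jinv_def initial_config_def okQ_def by (auto simp: sum_list_replicate)

lemma sl_bl: "ws \<noteq> [] \<Longrightarrow> sum_list (map f ws) = sum_list (map f (butlast ws)) + f (last ws)"
  by (induct ws rule: rev_induct) auto

lemma jinv_step: assumes inv: "jinv n k Q" and mv: "jenga_move n Q Q'" shows "jinv n k Q'"
proof -
  define L where "L = length Q"
  have ok: "okQ n Q" and sm: "sum_list (map card Q) = n * k" and L3: "3 \<le> L"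
    and full: "Q ! (L - 2) = {0..<n}" and cc: "n \<le> card (Q ! (L - 3)) + card (last Q)"
    using inv unfolding jinv_def L_def by auto
  obtain i j s where i: "i < L - 1" and i2: "card (last Q) < n \<longrightarrow> i \<noteq> L - 2" and j: "j \<in> Q ! i" and s: "s < n"
    and mv': "let Q1 = Q[i := Q ! i - {j}] in
             if card (last Q) < n
             then s \<notin> last Q \<and> Q' = butlast Q1 @ [insert s (last Q)]
             else Q' = Q1 @ [{s}]"
    using mv unfolding jenga_move_def L_def by blast
  define Q1 where "Q1 = Q[i := Q ! i - {j}]"
  have ne: "Q \<noteq> []" using L3 L_def by auto
  have lQ1: "length Q1 = L" unfolding Q1_def L_def by simp
  have Q1n: "t < L \<Longrightarrow> Q1 ! t = (if t = i then Q ! i - {j} else Q ! t)" for t unfolding Q1_def L_def by simp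
  have finQ: "t < L \<Longrightarrow> finite (Q ! t)" for t using ok unfolding okQ_def L_def by (meson finite_atLeastLessThan finite_subset)
  have subQ: "t < L \<Longrightarrow> Q ! t \<subseteq> {0..<n}" for t using ok unfolding okQ_def L_def by auto
  have cQi: "card (Q ! i - {j}) = card (Q ! i) - 1" "1 \<le> card (Q ! i)"
  proof -
    have fi: "finite (Q ! i)" using finQ[of i] i by simp
    show "card (Q ! i - {j}) = card (Q ! i) - 1" using fi j by simp
    show "1 \<le> card (Q ! i)" using fi j by (auto simp: card_gt_0_iff Suc_le_eq)
  qed
  have cQ1: "t < L \<Longrightarrow> card (Q ! t) \<le> card (Q1 ! t) + 1" for t
    using Q1n cQi by (cases "t = i") auto
  have okQ1: "t < L \<Longrightarrow> Q1 ! t \<subseteq> {0..<n}" for t using Q1n subQ by auto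
  have lastQ1: "last Q1 = last Q" unfolding Q1_def using i ne L_def by (simp add: last_list_update)
  have sQ1: "sum_list (map card Q1) + 1 = n * k"
  proof -
    have "map card Q1 = (map card Q)[i := card (Q ! i - {j})]" unfolding Q1_def by (simp add: map_update)
    then have "sum_list (map card Q1) = sum_list (map card Q) + card (Q ! i - {j}) - card (Q ! i)"
      using i L_def by (simp add: sum_list_update)
    moreover have "card (Q ! i) \<le> sum_list (map card Q)"
      using elem_le_sum_list[of i "map card Q"] i L_def by simp
    ultimately show ?thesis using cQi sm by linarith
  qed
  show ?thesis
  proof (cases "card (last Q) < n")
    case True
    then have i2': "i \<noteq> L - 2" using i2 by auto
    have sQ: "s \<notin> last Q" and Q': "Q' = butlast Q1 @ [insert s (last Q)]" using mv' True unfolding Q1_def Let_def by auto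
    have lQ': "length Q' = L" using Q' lQ1 L3 by simp
    have Q'n: "t < L - 1 \<Longrightarrow> Q' ! t = Q1 ! t" for t using Q' lQ1 by (simp add: nth_append nth_butlast)
    have lastQ': "last Q' = insert s (last Q)" using Q' by simp
    have finl: "finite (last Q)" using finQ[of "L - 1"] ne L_def L3 by (simp add: last_conv_nth)
    have subl: "last Q \<subseteq> {0..<n}" using subQ[of "L - 1"] ne L_def L3 by (simp add: last_conv_nth)
    have cl: "card (last Q') = card (last Q) + 1" using lastQ' finl sQ by simp
    have ok': "okQ n Q'"
      unfolding okQ_def
    proof (intro allI impI)
      fix t assume "t < length Q'"
      then show "Q' ! t \<subseteq> {0..<n}"
      proof (cases "t < L - 1")
        case True then show ?thesis using Q'n okQ1 by simp
      next
        case False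
        then have "t = L - 1" using \<open>t < length Q'\<close> lQ' by simp
        moreover have "Q' \<noteq> []" using lQ' L3 by auto
        ultimately have "Q' ! t = last Q'" using lQ' by (simp add: last_conv_nth)
        then show ?thesis using lastQ' subl s by auto
      qed
    qed
    have sm': "sum_list (map card Q') = n * k"
    proof -
      have "sum_list (map card Q') = sum_list (map card (butlast Q1)) + card (last Q')" using Q' lastQ' by simp
      moreover have "sum_list (map card Q1) = sum_list (map card (butlast Q1)) + card (last Q1)"
      proof (rule sl_bl)
        show "Q1 \<noteq> []" using lQ1 L3 by auto
      qed
      ultimately show ?thesis using sQ1 cl lastQ1 by simp
    qed
    have f': "Q' ! (length Q' - 2) = {0..<n}" using Q'n[of "L-2"] Q1n[of "L-2"] i2' full lQ' L3 by simp
    have c': "n \<le> card (Q' ! (length Q' - 3)) + card (last Q')"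
      using Q'n[of "L-3"] cQ1[of "L-3"] cc cl lQ' L3 by simp
    show ?thesis unfolding jinv_def using ok' sm' lQ' L3 f' c' by simp
  next
    case False
    have Q': "Q' = Q1 @ [{s}]" using mv' False unfolding Q1_def Let_def by auto
    have lQ': "length Q' = L + 1" using Q' lQ1 by simp
    have Q'n: "t < L \<Longrightarrow> Q' ! t = Q1 ! t" for t using Q' lQ1 by (simp add: nth_append)
    have ok': "okQ n Q'"
      unfolding okQ_def
    proof (intro allI impI)
      fix t assume "t < length Q'"
      then show "Q' ! t \<subseteq> {0..<n}"
      proof (cases "t < L")
        case True then show ?thesis using Q'n okQ1 by simp
      next
        case False
        then have "t = L" using \<open>t < length Q'\<close> lQ' by simp
        then have "Q' ! t = {s}" using Q' lQ1 by (simp add: nth_append)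
        then show ?thesis using s by simp
      qed
    qed
    have sm': "sum_list (map card Q') = n * k" using Q' sQ1 by simp
    have lastQ: "last Q = Q ! (L - 1)" using ne L_def by (simp add: last_conv_nth)
    have subl: "last Q \<subseteq> {0..<n}" using subQ[of "L - 1"] lastQ L3 by simp
    have lf: "last Q = {0..<n}"
      by (rule card_seteq) (use False subl in auto)
    have f': "Q' ! (length Q' - 2) = {0..<n}"
      using Q'n[of "L-1"] Q1n[of "L-1"] i lQ' L3 lastQ lf by simp
    have c': "n \<le> card (Q' ! (length Q' - 3)) + card (last Q')"
    proof -
      have "length Q' - 3 = L - 2" using lQ' L3 by simp
      then have "Q' ! (length Q' - 3) = Q1 ! (L - 2)" using Q'n[of "L-2"] L3 by simp
      moreover have "card (Q ! (L - 2)) = n" using full by simp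
      moreover have "last Q' = {s}" using Q' by simp
      ultimately show ?thesis using cQ1[of "L-2"] L3 by simp
    qed
    show ?thesis unfolding jinv_def using ok' sm' lQ' L3 f' c' by simp
  qed
qed

lemma jinv_reach: "(jenga_move n)\<^sup>*\<^sup>* (initial_config n k) Q \<Longrightarrow> 3 \<le> k \<Longrightarrow> jinv n k Q"
  by (induction rule: rtranclp_induct) (auto intro: jinv_init jinv_step)



theorem mainTheorem5:
  fixes n k :: nat and Q :: config
  assumes "n \<ge> 2" and "even n" and "k \<ge> 3" and "jenga_like n k Q"
  shows "genus n Q \<le> real (n * (n - 2) * (k - 2)) / 2"
proof -
  have inv: "jinv n k Q" using jinv_reach assms(3,4) unfolding jenga_like_def by blast
  have nonempty: "\<And>i. i < length Q \<Longrightarrow> Q ! i \<noteq> {}" using assms(4) unfolding jenga_like_def by blast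
  define L where "L = length Q"
  have ok: "okQ n Q" and sm: "sum_list (map card Q) = n * k" and L3: "3 \<le> L"
    and full: "Q ! (L - 2) = {0..<n}" and cc: "n \<le> card (Q ! (L - 3)) + card (last Q)"
    using inv unfolding jinv_def L_def by auto
  define m where "m = L - 3"
  have Lm: "L = m + 3" using L3 m_def by simp
  define c where "c = cn Q"
  define a where "a = (\<lambda>i. int (card (Q ! i)))"
  have n1: "1 \<le> n" using assms(1) by simp
  have chi: "euler_char n Q = 2 * (\<Sum>i<m+3. c i) - 2 * (\<Sum>i<m+3. c i * c (Suc i))"
    using euler_final[OF ok n1] unfolding c_def L_def[symmetric] Lm .
  have h1: "c (m+3) = 0" using cn_L[of Q] unfolding c_def L_def[symmetric] Lm .
  have h2: "c (m+1) = 1"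
  proof -
    have "m + 1 = L - 2" "L - 2 < length Q" using Lm L_def by auto
    then have "Sz Q (int (m+1)) = R0 n" using Sz_full[of "L-2" Q n] full by simp
    then show ?thesis unfolding c_def cn_def using cardR0(2)[OF n1] by simp
  qed
  have h3: "1 \<le> c i" if "i < m+3" for i
  proof -
    have il: "i < length Q" using that Lm L_def by simp
    have f: "finite (Sz Q (int i))" using finite_Sz[OF ok] .
    have "card (Sz Q (int i)) = card (Q ! i)" using card_Sz[OF il] .
    moreover have "finite (Q ! i)" using ok il unfolding okQ_def by (meson finite_atLeastLessThan finite_subset)
    ultimately have "Sz Q (int i) \<noteq> {}" using nonempty[OF il] by (metis card_0_eq card.empty)
    then show ?thesis unfolding c_def cn_def using rs_pos[OF f] by simp
  qed
  have h4: "2 * c i \<le> int n" if "i < m+3" for i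
    using rs_half[OF Sz_sub[OF ok, of "int i"] assms(2)] unfolding c_def cn_def by linarith
  have h5: "c i \<le> a i" if "i < m" for i
  proof -
    have il: "i < length Q" using that Lm L_def by simp
    show ?thesis using rs_le[OF finite_Sz[OF ok, of "int i"]] card_Sz[OF il] unfolding c_def cn_def a_def by simp
  qed
  have h6: "(\<Sum>i<m. a i) \<le> int n * (int k - 2)"
  proof -
    have "sum_list (map card Q) = (\<Sum>i<L. card (Q ! i))"
      unfolding sum_list_sum_nth L_def by (simp add: atLeast0LessThan)
    then have "(\<Sum>i<m+3. a i) = int n * int k" using sm unfolding a_def Lm by (metis of_nat_mult of_nat_sum)
    moreover have "(\<Sum>i<m+3. a i) = (\<Sum>i<m. a i) + a m + a (m+1) + a (m+2)"
      by (simp add: numeral_3_eq_3)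
    moreover have "a (m+1) = int n" using full Lm unfolding a_def by (simp add: numeral_3_eq_3)
    moreover have "int n \<le> a m + a (m+2)"
    proof -
      have ne: "Q \<noteq> []" using Lm L_def by auto
      have "last Q = Q ! (m+2)" using last_conv_nth[OF ne] Lm L_def by simp
      moreover have "L - 3 = m" using m_def by simp
      ultimately show ?thesis using cc unfolding a_def by simp
    qed
    ultimately show ?thesis by (simp add: algebra_simps)
  qed
  have main: "2 - 2 * (\<Sum>i<m+3. c i) + 2 * (\<Sum>i<m+3. c i * c (Suc i)) \<le> int n * (int n - 2) * (int k - 2)"
    by (rule comb[OF h1 h2 h3 h4 h5 h6]) (use assms(1) in auto)
  have d1: "int (n - 2) = int n - 2" using assms(1) by simp
  have d2: "int (k - 2) = int k - 2" using assms(3) by simp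
  have e: "int (n * (n - 2) * (k - 2)) = int n * (int n - 2) * (int k - 2)"
    by (simp only: of_nat_mult d1 d2)
  have "2 - euler_char n Q \<le> int (n * (n - 2) * (k - 2))" unfolding e chi using main by linarith
  then have "2 - real_of_int (euler_char n Q) \<le> real (n * (n - 2) * (k - 2))"
    by (metis of_int_diff of_int_le_iff of_int_numeral of_int_of_nat_eq)
  then show ?thesis unfolding genus_def by (simp add: divide_right_mono)
qed


end
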